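(* Let $c^{(k)}$ be an admissible control and $\rho^{(k)}$ the corresponding solution of the master equation. Let $c^{(k+1)}=(u^{(k+1)},n_1^{(k+1)},n_2^{(k+1)})$ be an admissible control and $\chi^{(k+1)}$ the solution of the adjoint system with control $c^{(k+1)}$ such that for every $t\in[0,T]$: $u^{(k+1)}(t)\in\arg\max_{|u|\le\mu}\mathcal K^u(\chi^{(k+1)}(t),\rho^{(k)}(t))\,u$ and $n_j^{(k+1)}(t)\in\arg\max_{n_j\in[0,n_{\max}]}\mathcal K^{n_j}(\chi^{(k+1)}(t),\rho^{(k)}(t))\,n_j$, $j=1,2$. Then $\langle\mathcal K^c(\chi^{(k+1)}(t),\rho^{(k)}(t)),c^{(k+1)}(t)-c^{(k)}(t)\rangle\ge0$ for all $t\in[0,T]$ and $J_1(c^{(k+1)})\ge J_1(c^{(k)})$. Moreover $J_1(c^{(k+1)})>J_1(c^{(k)})$ if at least one of the sets $\{t: u^{(k+1)}(t)\ne u^{(k)}(t),\ \mathcal K^u(\chi^{(k+1)}(t),\rho^{(k)}(t))\ne0\}$, $\{t: n_j^{(k+1)}(t)\ne n_j^{(k)}(t),\ \mathcal K^{n_j}(\chi^{(k+1)}(t),\rho^{(k)}(t))\ne0\}$ ($j=1,2$) has positive Lebesgue measure.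
   Context: Let $\sigma_x,\sigma_y,\sigma_z$ be the Pauli matrices, $\mathbb I_2,\mathbb I_4$ identity matrices, $\sigma^+=\begin{pmatrix}0&0\\1&0\end{pmatrix}$, $\sigma^-=\begin{pmatrix}0&1\\0&0\end{pmatrix}$, $\sigma_1^\pm=\sigma^\pm\otimes\mathbb I_2$, $\sigma_2^\pm=\mathbb I_2\otimes\sigma^\pm$, $W_1=\sigma_z\otimes\mathbb I_2$, $W_2=\mathbb I_2\otimes\sigma_z$. Fix parameters $\varepsilon,\omega_j,\Lambda_j,\Omega_j>0$ ($j=1,2$), $H_0=\frac{\omega_1}{2}W_1+\frac{\omega_2}{2}W_2$, and a Hermitian $4\times4$ matrix $V$ (in the paper $V=Q_1\otimes\mathbb I_2+\mathbb I_2\otimes Q_2$ or $V=Q_1\otimes Q_2$ with $Q_j=\sin\theta_j\cos\varphi_j\sigma_x+\sin\theta_j\sin\varphi_j\sigma_y+\cos\theta_j\sigma_z$). For $c=(u,n_1,n_2)\in\mathbb R^3$ let $H_c=H_0+\varepsilon\sum_{j=1}^2\Lambda_j n_jW_j+uV$ and $$\mathcal L^D_n(\rho)=\sum_{j=1}^2\Big[\Omega_j(n_j+1)\big(2\sigma_j^-\rho\sigma_j^+-\{\sigma_j^+\sigma_j^-,\rho\}\big)+\Omega_jn_j\big(2\sigma_j^+\rho\sigma_j^--\{\sigma_j^-\sigma_j^+,\rho\}\big)\Big],$$ $$\mathcal L^{D,\dagger}_n(\chi)=\sum_{j=1}^2\Big[\Omega_j(n_j+1)\big(2\sigma_j^+\chi\sigma_j^--\{\sigma_j^+\sigma_j^-,\chi\}\big)+\Omega_jn_j\big(2\sigma_j^-\chi\sigma_j^+-\{\sigma_j^-\sigma_j^+,\chi\}\big)\Big],$$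 where $\{A,B\}=AB+BA$, $[A,B]=AB-BA$. Fix $T>0$, $\mu,n_{\max}>0$, $Q=[-\mu,\mu]\times[0,n_{\max}]^2$; admissible controls are piecewise continuous $c=(u,n_1,n_2):[0,T]\to Q$. Fix density matrices $\rho_0,\rho_{\rm target}$ ($4\times 4$, positive semidefinite, trace one). The master equation is $\dot\rho(t)=-i[H_{c(t)},\rho(t)]+\varepsilon\mathcal L^D_{n(t)}(\rho(t))$, $\rho(0)=\rho_0$; the adjoint system is $\dot\chi(t)=-i[H_{c(t)},\chi(t)]-\varepsilon\mathcal L^{D,\dagger}_{n(t)}(\chi(t))$, $\chi(T)=\rho_{\rm target}$ (solved backward). For matrices, $\langle A,B\rangle={\rm Tr}(A^\dagger B)$. The objective is $J_1(c)={\rm Tr}(\rho(T)\rho_{\rm target})$ where $\rho$ solves the master equation with control $c$. The switching functions $\mathcal K^c=(\mathcal K^u,\mathcal K^{n_1},\mathcal K^{n_2})$ are the coefficients of $u,n_1,n_2$ in $\langle\chi,-i[H_c,\rho]+\varepsilon\mathcal L^D_n(\rho)\rangle$: $\mathcal K^u(\chi,\rho)=\langle\chi,-i[V,\rho]\rangle$, $\mathcal K^{n_j}(\chi,\rho)=\big\langle\chi,-i\varepsilon\Lambda_j[W_j,\rho]+\varepsilon\Omega_j\big(2\sigma_j^-\rho\sigma_j^++2\sigma_j^+\rho\sigma_j^--2\rho\big)\big\rangle$, $j=1,2$ (real for Hermitian $\chi,\rho$). *)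

theory Defs
  imports "HOL-Analysis.Analysis" "HOL-Library.Numeral_Type"
begin

text \<open>Two-qubit setting. 2x2 complex matrices are indexed by the two-element type 2
  (index 0 = first basis vector, index 1 = second); 4x4 matrices are indexed by
  2 \<times> 2, so that the Kronecker product has its standard meaning.\<close>

type_synonym mat2 = "complex^2^2"
type_synonym mat4 = "complex^(2\<times>2)^(2\<times>2)"

definition mat2_of :: "complex \<Rightarrow> complex \<Rightarrow> complex \<Rightarrow> complex \<Rightarrow> mat2" where
  "mat2_of a b c d = (\<chi> i j. if i = 0 then (if j = 0 then a else b) else (if j = 0 then c else d))"

definition sigma_x :: mat2 where "sigma_x = mat2_of 0 1 1 0"
definition sigma_y :: mat2 where "sigma_y = mat2_of 0 (- \<i>) \<i> 0"
definition sigma_z :: mat2 where "sigma_z = mat2_of 1 0 0 (-1)"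
definition sigma_plus :: mat2 where "sigma_plus = mat2_of 0 0 1 0"
definition sigma_minus :: mat2 where "sigma_minus = mat2_of 0 1 0 0"

definition kron :: "mat2 \<Rightarrow> mat2 \<Rightarrow> mat4" where
  "kron A B = (\<chi> p q. A $ fst p $ fst q * B $ snd p $ snd q)"

definition madj :: "mat4 \<Rightarrow> mat4" where "madj A = (\<chi> i j. cnj (A $ j $ i))"
definition cscale :: "complex \<Rightarrow> mat4 \<Rightarrow> mat4" where "cscale z A = (\<chi> i j. z * A $ i $ j)"
definition comm :: "mat4 \<Rightarrow> mat4 \<Rightarrow> mat4" where "comm A B = A ** B - B ** A"
definition acomm :: "mat4 \<Rightarrow> mat4 \<Rightarrow> mat4" where "acomm A B = A ** B + B ** A"
definition minner :: "mat4 \<Rightarrow> mat4 \<Rightarrow> complex" where "minner A B = trace (madj A ** B)"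

definition hermitian :: "mat4 \<Rightarrow> bool" where "hermitian A \<longleftrightarrow> madj A = A"

definition density_matrix :: "mat4 \<Rightarrow> bool" where
  "density_matrix A \<longleftrightarrow> hermitian A \<and>
     (\<forall>x :: complex^(2\<times>2). 0 \<le> Re (\<Sum>i\<in>UNIV. \<Sum>j\<in>UNIV. cnj (x $ i) * A $ i $ j * x $ j)) \<and> trace A = 1"

definition sig_p :: "nat \<Rightarrow> mat4" where
  "sig_p j = (if j = 1 then kron sigma_plus (mat 1) else kron (mat 1) sigma_plus)"
definition sig_m :: "nat \<Rightarrow> mat4" where
  "sig_m j = (if j = 1 then kron sigma_minus (mat 1) else kron (mat 1) sigma_minus)"
definition Wop :: "nat \<Rightarrow> mat4" where
  "Wop j = (if j = 1 then kron sigma_z (mat 1) else kron (mat 1) sigma_z)"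

record qsys =
  eps :: real
  omg :: "nat \<Rightarrow> real"
  Lam :: "nat \<Rightarrow> real"
  Omg :: "nat \<Rightarrow> real"
  Vop :: mat4

definition params_ok :: "qsys \<Rightarrow> bool" where
  "params_ok P \<longleftrightarrow> eps P > 0 \<and> (\<forall>j\<in>{1,2}. omg P j > 0 \<and> Lam P j > 0 \<and> Omg P j > 0)
                   \<and> hermitian (Vop P)"

type_synonym ctrl = "real \<times> real \<times> real"

definition cu :: "ctrl \<Rightarrow> real" where "cu c = fst c"
definition cn :: "ctrl \<Rightarrow> nat \<Rightarrow> real" where
  "cn c j = (if j = 1 then fst (snd c) else snd (snd c))"

definition H0 :: "qsys \<Rightarrow> mat4" where
  "H0 P = (omg P 1 / 2) *\<^sub>R Wop 1 + (omg P 2 / 2) *\<^sub>R Wop 2"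

definition Hc :: "qsys \<Rightarrow> ctrl \<Rightarrow> mat4" where
  "Hc P c = H0 P + eps P *\<^sub>R (\<Sum>j\<in>{1,2}. (Lam P j * cn c j) *\<^sub>R Wop j) + cu c *\<^sub>R Vop P"

definition LD :: "qsys \<Rightarrow> ctrl \<Rightarrow> mat4 \<Rightarrow> mat4" where
  "LD P c \<rho> = (\<Sum>j\<in>{1,2}.
      (Omg P j * (cn c j + 1)) *\<^sub>R (2 *\<^sub>R (sig_m j ** \<rho> ** sig_p j) - acomm (sig_p j ** sig_m j) \<rho>)
    + (Omg P j * cn c j) *\<^sub>R (2 *\<^sub>R (sig_p j ** \<rho> ** sig_m j) - acomm (sig_m j ** sig_p j) \<rho>))"

definition LD_adj :: "qsys \<Rightarrow> ctrl \<Rightarrow> mat4 \<Rightarrow> mat4" where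
  "LD_adj P c X = (\<Sum>j\<in>{1,2}.
      (Omg P j * (cn c j + 1)) *\<^sub>R (2 *\<^sub>R (sig_p j ** X ** sig_m j) - acomm (sig_p j ** sig_m j) X)
    + (Omg P j * cn c j) *\<^sub>R (2 *\<^sub>R (sig_m j ** X ** sig_p j) - acomm (sig_m j ** sig_p j) X))"

definition master_rhs :: "qsys \<Rightarrow> ctrl \<Rightarrow> mat4 \<Rightarrow> mat4" where
  "master_rhs P c \<rho> = cscale (- \<i>) (comm (Hc P c) \<rho>) + eps P *\<^sub>R LD P c \<rho>"

definition adjoint_rhs :: "qsys \<Rightarrow> ctrl \<Rightarrow> mat4 \<Rightarrow> mat4" where
  "adjoint_rhs P c X = cscale (- \<i>) (comm (Hc P c) X) - eps P *\<^sub>R LD_adj P c X"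

definition piecewise_continuous :: "real \<Rightarrow> (real \<Rightarrow> 'a::topological_space) \<Rightarrow> bool" where
  "piecewise_continuous T f \<longleftrightarrow> (\<exists>S. finite S \<and>
      (\<forall>t\<in>{0..T} - S. continuous (at t within {0..T}) f) \<and>
      (\<forall>s\<in>S. (0 < s \<and> s \<le> T \<longrightarrow> (\<exists>l. (f \<longlongrightarrow> l) (at_left s))) \<and>
              (0 \<le> s \<and> s < T \<longrightarrow> (\<exists>l. (f \<longlongrightarrow> l) (at_right s)))))"

definition admissible :: "real \<Rightarrow> real \<Rightarrow> real \<Rightarrow> (real \<Rightarrow> ctrl) \<Rightarrow> bool" where
  "admissible T \<mu> nmax c \<longleftrightarrow> piecewise_continuous T c \<and>
     (\<forall>t\<in>{0..T}. \<bar>cu (c t)\<bar> \<le> \<mu> \<and> (\<forall>j\<in>{1,2}. 0 \<le> cn (c t) j \<and> cn (c t) j \<le> nmax))"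

text \<open>Solutions (continuous on [0,T], satisfying the ODE except at finitely many times,
  namely the switching points of the piecewise continuous control).\<close>
definition master_solution ::
  "qsys \<Rightarrow> real \<Rightarrow> (real \<Rightarrow> ctrl) \<Rightarrow> mat4 \<Rightarrow> (real \<Rightarrow> mat4) \<Rightarrow> bool" where
  "master_solution P T c \<rho>0 \<rho> \<longleftrightarrow> continuous_on {0..T} \<rho> \<and> \<rho> 0 = \<rho>0 \<and>
     (\<exists>S. finite S \<and> (\<forall>t\<in>{0..T} - S.
        (\<rho> has_vector_derivative master_rhs P (c t) (\<rho> t)) (at t within {0..T})))"

definition adjoint_solution ::
  "qsys \<Rightarrow> real \<Rightarrow> (real \<Rightarrow> ctrl) \<Rightarrow> mat4 \<Rightarrow> (real \<Rightarrow> mat4) \<Rightarrow> bool" where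
  "adjoint_solution P T c \<rho>target X \<longleftrightarrow> continuous_on {0..T} X \<and> X T = \<rho>target \<and>
     (\<exists>S. finite S \<and> (\<forall>t\<in>{0..T} - S.
        (X has_vector_derivative adjoint_rhs P (c t) (X t)) (at t within {0..T})))"

definition J1_of :: "real \<Rightarrow> mat4 \<Rightarrow> (real \<Rightarrow> mat4) \<Rightarrow> real" where
  "J1_of T \<rho>target \<rho> = Re (trace (\<rho> T ** \<rho>target))"

definition K_u :: "qsys \<Rightarrow> mat4 \<Rightarrow> mat4 \<Rightarrow> complex" where
  "K_u P X \<rho> = minner X (cscale (- \<i>) (comm (Vop P) \<rho>))"

definition K_n :: "qsys \<Rightarrow> nat \<Rightarrow> mat4 \<Rightarrow> mat4 \<Rightarrow> complex" where
  "K_n P j X \<rho> = minner X (cscale (- \<i>) ((eps P * Lam P j) *\<^sub>R comm (Wop j) \<rho>)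
      + (eps P * Omg P j) *\<^sub>R (2 *\<^sub>R (sig_m j ** \<rho> ** sig_p j) + 2 *\<^sub>R (sig_p j ** \<rho> ** sig_m j) - 2 *\<^sub>R \<rho>))"

end

theory Submission
  imports Defs
begin


lemma madj_nth[simp]: "madj A $ i $ j = cnj (A $ j $ i)" by (simp add: madj_def)
lemma cscale_nth[simp]: "cscale z A $ i $ j = z * A $ i $ j" by (simp add: cscale_def)

lemma madj_mult: "madj (A ** B) = madj B ** madj A"
  by (simp add: vec_eq_iff matrix_matrix_mult_def mult.commute)
lemma madj_add: "madj (A + B) = madj A + madj B" by (simp add: vec_eq_iff)
lemma madj_diff: "madj (A - B) = madj A - madj B" by (simp add: vec_eq_iff)
lemma madj_scaleR: "madj (r *\<^sub>R A) = r *\<^sub>R madj A" by (simp add: vec_eq_iff)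
lemma madj_cscale: "madj (cscale z A) = cscale (cnj z) (madj A)" by (simp add: vec_eq_iff)
lemma madj_madj[simp]: "madj (madj A) = A" by (simp add: vec_eq_iff)
lemma madj_sum: "madj (sum f S) = sum (\<lambda>x. madj (f x)) S"
  by (induction S rule: infinite_finite_induct) (auto simp: madj_add vec_eq_iff)
lemma madj_mat1[simp]: "madj (mat 1) = mat 1" by (simp add: vec_eq_iff mat_def)
lemma madj_comm: "madj (comm A B) = comm (madj B) (madj A)"
  by (simp add: comm_def madj_diff madj_mult)
lemma madj_acomm: "madj (acomm A B) = acomm (madj B) (madj A)"
  by (simp add: acomm_def madj_add madj_mult add.commute)

lemma trace_madj: "trace (madj A) = cnj (trace A)" by (simp add: trace_def)

lemma minner_mult_left: "minner (A ** X) Y = minner X (madj A ** Y)"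
  unfolding minner_def madj_mult matrix_mul_assoc ..
lemma minner_mult_right: "minner X (Y ** A) = minner (X ** madj A) Y"
proof -
  have "minner X (Y ** A) = trace ((madj X ** Y) ** A)"
    unfolding minner_def matrix_mul_assoc ..
  also have "\<dots> = trace (A ** (madj X ** Y))" by (rule trace_mul_sym)
  also have "\<dots> = minner (X ** madj A) Y"
    unfolding minner_def madj_mult madj_madj matrix_mul_assoc ..
  finally show ?thesis .
qed
lemma scaleR_cplx: "r *\<^sub>R (z::complex) = of_real r * z" by (simp add: scaleR_conv_of_real)
lemma minner_expand: "minner X Y = (\<Sum>i\<in>UNIV. \<Sum>k\<in>UNIV. cnj (X $ k $ i) * Y $ k $ i)"
  by (simp add: minner_def trace_def matrix_matrix_mult_def)
lemma minner_add_left: "minner (A + B) Y = minner A Y + minner B Y"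
  by (simp add: minner_expand distrib_right sum.distrib)
lemma minner_add_right: "minner X (A + B) = minner X A + minner X B"
  by (simp add: minner_expand distrib_left sum.distrib)
lemma minner_diff_left: "minner (A - B) Y = minner A Y - minner B Y"
  by (simp add: minner_expand left_diff_distrib sum_subtractf)
lemma minner_diff_right: "minner X (A - B) = minner X A - minner X B"
  by (simp add: minner_expand right_diff_distrib sum_subtractf)
lemma minner_scaleR_left: "minner (r *\<^sub>R A) Y = of_real r * minner A Y"
  by (simp add: minner_expand sum_distrib_left mult.assoc scaleR_cplx)
lemma minner_scaleR_right: "minner X (r *\<^sub>R A) = of_real r * minner X A"
  by (simp add: minner_expand sum_distrib_left mult.left_commute scaleR_cplx)
lemma minner_cscale_left: "minner (cscale z A) Y = cnj z * minner A Y"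
  by (simp add: minner_expand sum_distrib_left mult.assoc)
lemma minner_cscale_right: "minner X (cscale z A) = z * minner X A"
  by (simp add: minner_expand sum_distrib_left mult.left_commute)
lemma minner_zero_left[simp]: "minner 0 Y = 0" by (simp add: minner_expand)
lemma minner_zero_right[simp]: "minner X 0 = 0" by (simp add: minner_expand)
lemma minner_sum_left: "minner (sum f S) Y = (\<Sum>x\<in>S. minner (f x) Y)"
  by (induction S rule: infinite_finite_induct) (simp_all add: minner_add_left)
lemma minner_sum_right: "minner X (sum f S) = (\<Sum>x\<in>S. minner X (f x))"
  by (induction S rule: infinite_finite_induct) (simp_all add: minner_add_right)

lemma minner_comm: "hermitian H \<Longrightarrow> minner (comm H X) Y = minner X (comm H Y)"
proof -
  assume h: "hermitian H"
  have "minner (comm H X) Y = minner (H ** X) Y - minner (X ** H) Y"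
    by (simp add: comm_def minner_diff_left)
  also have "minner (H ** X) Y = minner X (H ** Y)" using h
    by (simp add: minner_mult_left hermitian_def)
  also have "minner (X ** H) Y = minner X (Y ** H)" using h
    by (metis minner_mult_right hermitian_def)
  finally show ?thesis by (simp add: comm_def minner_diff_right)
qed
lemma minner_acomm: "hermitian H \<Longrightarrow> minner (acomm H X) Y = minner X (acomm H Y)"
proof -
  assume h: "hermitian H"
  have "minner (acomm H X) Y = minner (H ** X) Y + minner (X ** H) Y"
    by (simp add: acomm_def minner_add_left)
  also have "minner (H ** X) Y = minner X (H ** Y)" using h
    by (simp add: minner_mult_left hermitian_def)
  also have "minner (X ** H) Y = minner X (Y ** H)" using h
    by (metis minner_mult_right hermitian_def)
  finally show ?thesis by (simp add: acomm_def minner_add_right)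
qed
lemma minner_sandwich: "minner (A ** X ** B) Y = minner X (madj A ** Y ** madj B)"
proof -
  have "minner (A ** X ** B) Y = minner (A ** (X ** B)) Y" by (simp add: matrix_mul_assoc)
  also have "\<dots> = minner (X ** B) (madj A ** Y)" by (rule minner_mult_left)
  also have "\<dots> = minner X (madj A ** Y ** madj B)" by (metis minner_mult_right madj_madj)
  finally show ?thesis .
qed

lemma cnj_minner: "cnj (minner X Y) = minner Y X"
proof -
  have "cnj (minner X Y) = trace (madj (madj X ** Y))" unfolding minner_def trace_madj ..
  also have "\<dots> = minner Y X" unfolding madj_mult madj_madj minner_def ..
  finally show ?thesis .
qed
lemma minner_herm_real: "hermitian X \<Longrightarrow> hermitian Y \<Longrightarrow> Im (minner X Y) = 0"
proof -
  assume "hermitian X" "hermitian Y"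
  then have h: "madj X = X" "madj Y = Y" unfolding hermitian_def by auto
  have "cnj (minner X Y) = minner Y X" by (rule cnj_minner)
  also have "\<dots> = trace (Y ** X)" unfolding minner_def h ..
  also have "\<dots> = trace (X ** Y)" by (rule trace_mul_sym)
  also have "\<dots> = minner X Y" unfolding minner_def h ..
  finally show ?thesis by (metis Reals_cnj_iff complex_is_Real_iff)
qed


lemma two_eq0: "(2::2) = 0" by simp
lemma ex2: "(x::2) = 0 \<or> x = 1" using exhaust_2[of x] two_eq0 by auto
lemma UNIV2: "(UNIV::2 set) = {0,1}" using ex2 by auto
lemma UNIV_22: "(UNIV::(2\<times>2) set) = {(0,0),(0,1),(1,0),(1,1)}" using ex2 by auto
lemma all22: "(\<forall>p::2\<times>2. P p) \<longleftrightarrow> P (0,0) \<and> P (0,1) \<and> P (1,0) \<and> P (1,1)"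
  by (metis UNIV_22 UNIV_I insert_iff empty_iff)
lemma kron_nth[simp]: "kron A B $ p $ q = A $ fst p $ fst q * B $ snd p $ snd q" by (simp add: kron_def)
lemma m2[simp]: "mat2_of a b c d $ 0 $ 0 = a" "mat2_of a b c d $ 0 $ 1 = b"
  "mat2_of a b c d $ 1 $ 0 = c" "mat2_of a b c d $ 1 $ 1 = d" by (simp_all add: mat2_of_def)
lemma mat1_2[simp]: "(mat 1 :: mat2) $ 0 $ 0 = 1" "(mat 1 :: mat2) $ 0 $ 1 = 0"
  "(mat 1 :: mat2) $ 1 $ 0 = 0" "(mat 1 :: mat2) $ 1 $ 1 = 1" by (simp_all add: mat_def)
lemma madj_sig_p: "madj (sig_p j) = sig_m j"
  unfolding vec_eq_iff all22
  by (simp add: sig_p_def sig_m_def sigma_plus_def sigma_minus_def)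
lemma madj_sig_m: "madj (sig_m j) = sig_p j"
  unfolding vec_eq_iff all22
  by (simp add: sig_p_def sig_m_def sigma_plus_def sigma_minus_def)
lemma herm_W: "hermitian (Wop j)"
  unfolding hermitian_def vec_eq_iff all22
  by (simp add: Wop_def sigma_z_def)
lemma mm_nth: "((A::mat4) ** B) $ i $ j = A$i$(0,0)*B$(0,0)$j + A$i$(0,1)*B$(0,1)$j + A$i$(1,0)*B$(1,0)$j + A$i$(1,1)*B$(1,1)$j"
  by (simp add: matrix_matrix_mult_def UNIV_22)
lemma mat1_4: "(mat 1 :: mat4) $ i $ j = (if i = j then 1 else 0)" by (simp add: mat_def)
lemma sig_sum: "sig_p j ** sig_m j + sig_m j ** sig_p j = mat 1"
  unfolding vec_eq_iff all22
  by (simp add: mm_nth mat1_4 sig_p_def sig_m_def sigma_plus_def sigma_minus_def)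

lemma mm_add_left: "((A::mat4) + B) ** C = A ** C + B ** C"
  unfolding vec_eq_iff by (simp add: mm_nth algebra_simps)
lemma mm_add_right: "(C::mat4) ** (A + B) = C ** A + C ** B"
  unfolding vec_eq_iff by (simp add: mm_nth algebra_simps)
lemma mm_diff_left: "((A::mat4) - B) ** C = A ** C - B ** C"
  unfolding vec_eq_iff by (simp add: mm_nth algebra_simps)
lemma mm_diff_right: "(C::mat4) ** (A - B) = C ** A - C ** B"
  unfolding vec_eq_iff by (simp add: mm_nth algebra_simps)
lemma mm_scaleR_left: "((r *\<^sub>R A)::mat4) ** C = r *\<^sub>R (A ** C)"
  unfolding vec_eq_iff by (simp add: mm_nth algebra_simps)
lemma mm_scaleR_right: "(C::mat4) ** (r *\<^sub>R A) = r *\<^sub>R (C ** A)"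
  unfolding vec_eq_iff by (simp add: mm_nth algebra_simps)
lemma mm_zero_left[simp]: "(0::mat4) ** C = 0"
  unfolding vec_eq_iff by (simp add: mm_nth)
lemma mm_zero_right[simp]: "(C::mat4) ** 0 = 0"
  unfolding vec_eq_iff by (simp add: mm_nth)

lemma comm_add_left: "comm (A + B) Y = comm A Y + comm B Y"
  by (simp add: comm_def mm_add_left mm_add_right algebra_simps)
lemma comm_scaleR_left: "comm (r *\<^sub>R A) Y = r *\<^sub>R comm A Y"
  by (simp add: comm_def mm_scaleR_left mm_scaleR_right scaleR_diff_right)
lemma comm_zero_left[simp]: "comm 0 Y = 0"
  unfolding comm_def vec_eq_iff by (simp add: mm_nth)
lemma comm_sum_left: "comm (sum f S) Y = (\<Sum>x\<in>S. comm (f x) Y)"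
  by (induction S rule: infinite_finite_induct) (simp_all add: comm_add_left)

lemma acomm_sym: "acomm A B = acomm B A" by (simp add: acomm_def add.commute)
lemma cscale_comm_swap: "cscale \<i> (comm B A) = cscale (- \<i>) (comm A B)"
  unfolding vec_eq_iff comm_def by (simp add: algebra_simps)
lemma herm_Hc: "hermitian (Vop P) \<Longrightarrow> hermitian (Hc P c)"
  using herm_W unfolding hermitian_def
  by (simp add: Hc_def H0_def madj_add madj_scaleR madj_sum)

lemmas madj_simps = madj_add madj_diff madj_scaleR madj_sum madj_mult madj_cscale madj_comm madj_acomm
  madj_sig_p madj_sig_m matrix_mul_assoc

lemma madj_master: "hermitian (Vop P) \<Longrightarrow> madj (master_rhs P c X) = master_rhs P c (madj X)"
proof -
  assume h: "hermitian (Vop P)"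
  have H: "madj (Hc P c) = Hc P c" using herm_Hc[OF h] by (simp add: hermitian_def)
  show ?thesis
    unfolding master_rhs_def LD_def
    by (simp add: madj_simps H cscale_comm_swap acomm_sym)
qed
lemma madj_adjoint: "hermitian (Vop P) \<Longrightarrow> madj (adjoint_rhs P c X) = adjoint_rhs P c (madj X)"
proof -
  assume h: "hermitian (Vop P)"
  have H: "madj (Hc P c) = Hc P c" using herm_Hc[OF h] by (simp add: hermitian_def)
  show ?thesis
    unfolding adjoint_rhs_def LD_adj_def
    by (simp add: madj_simps H cscale_comm_swap acomm_sym)
qed

lemma herm_pm: "hermitian (sig_p j ** sig_m j)" "hermitian (sig_m j ** sig_p j)"
  unfolding hermitian_def by (simp_all add: madj_mult madj_sig_p madj_sig_m)

lemma minner_LD: "minner (LD_adj P c X) Y = minner X (LD P c Y)"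
  unfolding LD_adj_def LD_def
  by (simp add: minner_sum_left minner_sum_right minner_add_left minner_add_right minner_diff_left
      minner_diff_right minner_scaleR_left minner_scaleR_right minner_sandwich minner_acomm herm_pm
      madj_sig_p madj_sig_m)

lemma duality: "hermitian (Vop P) \<Longrightarrow> minner (adjoint_rhs P c X) Y + minner X (master_rhs P c Y) = 0"
proof -
  assume h: "hermitian (Vop P)"
  have "minner (adjoint_rhs P c X) Y = \<i> * minner X (comm (Hc P c) Y) - of_real (eps P) * minner X (LD P c Y)"
    unfolding adjoint_rhs_def
    by (simp add: minner_diff_left minner_cscale_left minner_scaleR_left minner_comm[OF herm_Hc[OF h]] minner_LD)
  moreover have "minner X (master_rhs P c Y) = - \<i> * minner X (comm (Hc P c) Y) + of_real (eps P) * minner X (LD P c Y)"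
    unfolding master_rhs_def
    by (simp add: minner_add_right minner_cscale_right minner_scaleR_right)
  ultimately show ?thesis by simp
qed

lemma acomm_mat1: "acomm (mat 1) Y = 2 *\<^sub>R Y"
  unfolding acomm_def vec_eq_iff by (simp add: mm_nth mat1_4 scaleR_cplx all22)
lemma acomm_add_left: "acomm (A + B) Y = acomm A Y + acomm B Y"
  by (simp add: acomm_def mm_add_left mm_add_right algebra_simps)
lemma acomm_pm: "acomm (sig_m j ** sig_p j) Y = 2 *\<^sub>R Y - acomm (sig_p j ** sig_m j) Y"
  using acomm_add_left[of "sig_p j ** sig_m j" "sig_m j ** sig_p j" Y] sig_sum[of j] acomm_mat1[of Y]
  by (simp add: algebra_simps)

lemma sum12: "(\<Sum>j\<in>{1,2::nat}. f j) = f 1 + f 2" by simp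

definition Gm :: "qsys \<Rightarrow> mat4 \<Rightarrow> mat4 \<Rightarrow> complex" where
  "Gm P X Y = minner X (cscale (- \<i>) (comm (H0 P) Y)) + of_real (eps P) *
     (\<Sum>j\<in>{1,2}. of_real (Omg P j) * minner X (2 *\<^sub>R (sig_m j ** Y ** sig_p j) - acomm (sig_p j ** sig_m j) Y))"

lemmas lin_simps = minner_sum_right minner_add_right minner_diff_right minner_scaleR_right minner_cscale_right
  comm_add_left comm_scaleR_left comm_sum_left sum12

lemma minner_master_aff: "minner X (master_rhs P c Y) = Gm P X Y + of_real (cu c) * K_u P X Y
   + (\<Sum>j\<in>{1,2}. of_real (cn c j) * K_n P j X Y)"
  unfolding master_rhs_def Gm_def K_u_def K_n_def Hc_def LD_def acomm_pm
  by (simp add: lin_simps algebra_simps)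

lemma bb_minner: "bounded_bilinear minner"
proof -
  have "bilinear minner"
    unfolding bilinear_def
    by (auto intro!: linearI simp: minner_add_left minner_add_right minner_scaleR_left minner_scaleR_right scaleR_cplx)
  then show ?thesis by (simp add: bilinear_conv_bounded_bilinear)
qed
lemma bl_madj: "bounded_linear madj"
proof -
  have "linear madj" by (auto intro!: linearI simp: madj_add madj_scaleR)
  then show ?thesis by (simp add: linear_conv_bounded_linear)
qed
lemma minner_vderiv:
  "(f has_vector_derivative f') (at x within s) \<Longrightarrow> (g has_vector_derivative g') (at x within s) \<Longrightarrow>
   ((\<lambda>x. minner (f x) (g x)) has_vector_derivative (minner (f x) g' + minner f' (g x))) (at x within s)"
  by (rule bounded_bilinear.has_vector_derivative[OF bb_minner])

lemma minner_unit: "minner (\<chi> a b. if a = k \<and> b = i then 1 else 0) A = A $ k $ i"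
proof -
  have e: "(\<Sum>ka\<in>UNIV. if ka = k \<and> ia = i then A$k$i else 0) = (if ia = i then A$k$i else 0)" for ia
    by (cases "ia = i") simp_all
  show ?thesis
    by (simp add: minner_expand if_distrib[of cnj] if_distrib[of "\<lambda>z. z * _"] e cong: if_cong)
qed
lemma ext_minner: "(\<And>Z. minner Z A = minner Z B) \<Longrightarrow> A = B"
  unfolding vec_eq_iff by (metis minner_unit)

lemma cu_e[simp]: "cu (a, b, c) = a" by (simp add: cu_def)
lemma cn_e[simp]: "cn (a, b, c) 1 = b" "cn (a, b, c) 2 = c" by (simp_all add: cn_def)

lemma master_aff: "master_rhs P c X = master_rhs P (0,0,0) X
   + cu c *\<^sub>R (master_rhs P (1,0,0) X - master_rhs P (0,0,0) X)
   + cn c 1 *\<^sub>R (master_rhs P (0,1,0) X - master_rhs P (0,0,0) X)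
   + cn c 2 *\<^sub>R (master_rhs P (0,0,1) X - master_rhs P (0,0,0) X)"
  by (rule ext_minner) (simp add: minner_add_right minner_diff_right minner_scaleR_right minner_master_aff sum12 cn_def algebra_simps)

lemma minner_adjoint_aff: "hermitian (Vop P) \<Longrightarrow> minner Z (adjoint_rhs P c X) =
   - cnj (Gm P X Z) - of_real (cu c) * cnj (K_u P X Z) - of_real (cn c 1) * cnj (K_n P 1 X Z)
   - of_real (cn c 2) * cnj (K_n P 2 X Z)"
proof -
  assume h: "hermitian (Vop P)"
  have "minner Z (adjoint_rhs P c X) = cnj (minner (adjoint_rhs P c X) Z)"
    by (simp add: cnj_minner)
  also have "minner (adjoint_rhs P c X) Z = - minner X (master_rhs P c Z)"
    using duality[OF h, of c X Z] by (simp add: eq_neg_iff_add_eq_0)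
  finally show ?thesis unfolding minner_master_aff sum12 by simp
qed

lemma adjoint_aff: "hermitian (Vop P) \<Longrightarrow> adjoint_rhs P c X = adjoint_rhs P (0,0,0) X
   + cu c *\<^sub>R (adjoint_rhs P (1,0,0) X - adjoint_rhs P (0,0,0) X)
   + cn c 1 *\<^sub>R (adjoint_rhs P (0,1,0) X - adjoint_rhs P (0,0,0) X)
   + cn c 2 *\<^sub>R (adjoint_rhs P (0,0,1) X - adjoint_rhs P (0,0,0) X)"
  by (rule ext_minner) (simp add: minner_add_right minner_diff_right minner_scaleR_right minner_adjoint_aff cn_def algebra_simps)

lemma minner_master_dual: "hermitian (Vop P) \<Longrightarrow> minner Z (master_rhs P c X) = - minner (adjoint_rhs P c Z) X"
  using duality[of P c Z X] by (simp add: eq_neg_iff_add_eq_0 add.commute)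
lemma minner_adjoint_dual: "hermitian (Vop P) \<Longrightarrow> minner Z (adjoint_rhs P c X) = - cnj (minner X (master_rhs P c Z))"
proof -
  assume h: "hermitian (Vop P)"
  have "minner Z (adjoint_rhs P c X) = cnj (minner (adjoint_rhs P c X) Z)"
    by (simp add: cnj_minner)
  also have "minner (adjoint_rhs P c X) Z = - minner X (master_rhs P c Z)"
    using duality[OF h, of c X Z] by (simp add: eq_neg_iff_add_eq_0)
  finally show ?thesis by simp
qed
lemma lin_master: "hermitian (Vop P) \<Longrightarrow> linear (master_rhs P c)"
  by (auto intro!: linearI ext_minner simp: minner_master_dual minner_add_right minner_scaleR_right minner_add_left minner_scaleR_left)
lemma lin_adjoint: "hermitian (Vop P) \<Longrightarrow> linear (adjoint_rhs P c)"
  by (auto intro!: linearI ext_minner simp: minner_adjoint_dual minner_add_right minner_scaleR_right minner_add_left minner_scaleR_left)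

lemma unif_bound:
  fixes F :: "ctrl \<Rightarrow> mat4 \<Rightarrow> mat4"
  assumes lin: "\<And>c. linear (F c)"
    and aff: "\<And>c X. F c X = F (0,0,0) X + cu c *\<^sub>R (F (1,0,0) X - F (0,0,0) X)
       + cn c 1 *\<^sub>R (F (0,1,0) X - F (0,0,0) X) + cn c 2 *\<^sub>R (F (0,0,1) X - F (0,0,0) X)"
  shows "\<exists>C\<ge>0. \<forall>c X. \<bar>cu c\<bar> \<le> m \<and> \<bar>cn c 1\<bar> \<le> n \<and> \<bar>cn c 2\<bar> \<le> n \<longrightarrow> norm (F c X) \<le> C * norm X"
proof -
  have l: "linear (\<lambda>X. F e X - F (0,0,0) X)" for e
    using lin by (simp add: linear_compose_sub)
  obtain B0 where B0: "B0 > 0" "\<And>x. norm (F (0,0,0) x) \<le> B0 * norm x" using linear_bounded_pos[OF lin] by blast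
  obtain B1 where B1: "B1 > 0" "\<And>x. norm (F (1,0,0) x - F (0,0,0) x) \<le> B1 * norm x" using linear_bounded_pos[OF l] by blast
  obtain B2 where B2: "B2 > 0" "\<And>x. norm (F (0,1,0) x - F (0,0,0) x) \<le> B2 * norm x" using linear_bounded_pos[OF l] by blast
  obtain B3 where B3: "B3 > 0" "\<And>x. norm (F (0,0,1) x - F (0,0,0) x) \<le> B3 * norm x" using linear_bounded_pos[OF l] by blast
  show ?thesis
  proof (intro exI[of _ "B0 + \<bar>m\<bar> * B1 + \<bar>n\<bar> * B2 + \<bar>n\<bar> * B3"] conjI allI impI)
    show "0 \<le> B0 + \<bar>m\<bar> * B1 + \<bar>n\<bar> * B2 + \<bar>n\<bar> * B3" using B0 B1 B2 B3 by simp
    fix c X assume cb: "\<bar>cu c\<bar> \<le> m \<and> \<bar>cn c 1\<bar> \<le> n \<and> \<bar>cn c 2\<bar> \<le> n"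
    have "norm (F c X) \<le> norm (F (0,0,0) X) + \<bar>cu c\<bar> * norm (F (1,0,0) X - F (0,0,0) X)
       + \<bar>cn c 1\<bar> * norm (F (0,1,0) X - F (0,0,0) X) + \<bar>cn c 2\<bar> * norm (F (0,0,1) X - F (0,0,0) X)"
      unfolding aff[of c X] by (intro order.trans[OF norm_triangle_ineq] add_mono order_refl; simp)+
    also have "\<dots> \<le> B0 * norm X + \<bar>m\<bar> * (B1 * norm X) + \<bar>n\<bar> * (B2 * norm X) + \<bar>n\<bar> * (B3 * norm X)"
      using cb B0 B1 B2 B3
      by (intro add_mono mult_mono; auto)
    finally show "norm (F c X) \<le> (B0 + \<bar>m\<bar> * B1 + \<bar>n\<bar> * B2 + \<bar>n\<bar> * B3) * norm X"
      by (simp add: algebra_simps)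
  qed
qed

lemma cscale_scaleR: "cscale z (r *\<^sub>R A) = r *\<^sub>R cscale z A"
  unfolding vec_eq_iff by (simp add: algebra_simps)
lemma Ku_real: "hermitian (Vop P) \<Longrightarrow> hermitian X \<Longrightarrow> hermitian Y \<Longrightarrow> Im (K_u P X Y) = 0"
  unfolding K_u_def
  by (rule minner_herm_real) (auto simp: hermitian_def madj_simps cscale_comm_swap)
lemma Kn_real: "hermitian X \<Longrightarrow> hermitian Y \<Longrightarrow> Im (K_n P j X Y) = 0"
  unfolding K_n_def
  using herm_W[of j]
  by (intro minner_herm_real) (auto simp: hermitian_def madj_simps cscale_comm_swap cscale_scaleR)


lemma ftc_within:
  fixes f :: "real \<Rightarrow> 'a::banach"
  assumes "a \<le> b" "finite S" "continuous_on {a..b} f"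
    and "\<And>x. x \<in> {a..b} - S \<Longrightarrow> (f has_vector_derivative f' x) (at x within {a..b})"
  shows "(f' has_integral (f b - f a)) {a..b}"
proof (rule fundamental_theorem_of_calculus_interior_strong[OF assms(2,1) _ assms(3)])
  fix x assume x: "x \<in> {a<..<b} - S"
  then have "(f has_vector_derivative f' x) (at x within {a..b})" using assms(4) by auto
  moreover have "at x within {a..b} = at x" using x by (intro at_within_Icc_at) auto
  ultimately show "(f has_vector_derivative f' x) (at x)" by simp
qed

lemma ftc_sub:
  fixes f :: "real \<Rightarrow> 'a::banach"
  assumes "a \<le> s" "s \<le> t" "t \<le> b" "finite S" "continuous_on {a..b} f"
    and "\<And>x. x \<in> {a..b} - S \<Longrightarrow> (f has_vector_derivative f' x) (at x within {a..b})"
  shows "(f' has_integral (f t - f s)) {s..t}"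
proof (rule ftc_within[OF assms(2,4)])
  show "continuous_on {s..t} f" using assms(1,3) by (intro continuous_on_subset[OF assms(5)]) auto
  fix x assume "x \<in> {s..t} - S"
  then show "(f has_vector_derivative f' x) (at x within {s..t})"
    using assms by (intro has_vector_derivative_within_subset[OF assms(6)]) auto
qed

lemma gronwall_zero:
  fixes D :: "real \<Rightarrow> 'a::{real_inner,banach}"
  assumes ab: "a \<le> b" and S: "finite S" and cont: "continuous_on {a..b} D"
    and der: "\<And>t. t \<in> {a..b} - S \<Longrightarrow> (D has_vector_derivative D' t) (at t within {a..b})"
    and bd: "\<And>t. t \<in> {a..b} - S \<Longrightarrow> norm (D' t) \<le> C * norm (D t)"
    and C: "C \<ge> 0"
    and z: "D a = 0 \<or> D b = 0"
  shows "\<forall>t\<in>{a..b}. D t = 0"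
proof
  fix t assume t: "t \<in> {a..b}"
  define s where "s = (if D a = 0 then -1 else 1::real)"
  have s2: "s * s = 1" "\<bar>s\<bar> = 1" by (auto simp: s_def)
  define \<phi> where "\<phi> x = exp (2 * s * C * x) * (D x \<bullet> D x)" for x
  define \<phi>' where "\<phi>' x = (if x \<in> S then 0 else exp (2 * s * C * x) * (2 * s * C * (D x \<bullet> D x) + 2 * (D x \<bullet> D' x)))" for x
  have pder: "(\<phi> has_vector_derivative \<phi>' x) (at x within {a..b})" if "x \<in> {a..b} - S" for x
  proof -
    have "((\<lambda>x. D x \<bullet> D x) has_vector_derivative (D x \<bullet> D' x + D' x \<bullet> D x)) (at x within {a..b})"
      by (rule bounded_bilinear.has_vector_derivative[OF bounded_bilinear_inner der[OF that] der[OF that]])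
    then have 1: "((\<lambda>x. D x \<bullet> D x) has_real_derivative (2 * (D x \<bullet> D' x))) (at x within {a..b})"
      by (simp add: has_real_derivative_iff_has_vector_derivative inner_commute)
    have 2: "((\<lambda>x. exp (2 * s * C * x)) has_real_derivative (exp (2 * s * C * x) * (2 * s * C))) (at x within {a..b})"
      by (auto intro!: derivative_eq_intros)
    show ?thesis unfolding has_real_derivative_iff_has_vector_derivative[symmetric] \<phi>_def \<phi>'_def
      using DERIV_mult[OF 2 1] that by (simp add: algebra_simps)
  qed
  have pcont: "continuous_on {a..b} \<phi>" unfolding \<phi>_def
    by (intro continuous_intros cont)
  have key: "s * (D x \<bullet> D' x) \<ge> - C * (D x \<bullet> D x)" if "x \<in> {a..b} - S" for x
  proof -
    have "\<bar>D x \<bullet> D' x\<bar> \<le> norm (D x) * norm (D' x)" by (rule Cauchy_Schwarz_ineq2)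
    also have "\<dots> \<le> norm (D x) * (C * norm (D x))" by (rule mult_left_mono[OF bd[OF that]]) simp
    also have "\<dots> = C * (D x \<bullet> D x)" by (simp add: power2_norm_eq_inner[symmetric] power2_eq_square)
    finally have "\<bar>D x \<bullet> D' x\<bar> \<le> C * (D x \<bullet> D x)" .
    then show ?thesis using s2 by (auto simp: s_def split: if_splits)
  qed
  have sign: "s * \<phi>' x \<ge> 0" if "x \<in> {a..b}" for x
  proof (cases "x \<in> S")
    case False
    then have x: "x \<in> {a..b} - S" using that by auto
    have "s * (2 * s * C * (D x \<bullet> D x) + 2 * (D x \<bullet> D' x)) = 2 * C * (D x \<bullet> D x) + 2 * (s * (D x \<bullet> D' x))"
      using s2 by (simp add: algebra_simps)
    also have "\<dots> \<ge> 0" using key[OF x] C by (simp add: inner_ge_zero)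
    finally show ?thesis unfolding \<phi>'_def using False by (simp add: mult.left_commute[of s])
  qed (simp add: \<phi>'_def)
  have "\<phi> t \<le> 0"
  proof (cases "D a = 0")
    case True
    then have sv: "s = -1" by (simp add: s_def)
    have I: "(\<phi>' has_integral (\<phi> t - \<phi> a)) {a..t}"
      by (rule ftc_sub[OF order_refl _ _ S pcont pder]) (use t in auto)
    have "- (\<phi> t - \<phi> a) \<ge> 0"
    proof (rule has_integral_nonneg[OF has_integral_neg[OF I]])
      fix x assume "x \<in> {a..t}"
      then have "x \<in> {a..b}" using t by auto
      then show "- \<phi>' x \<ge> 0" using sign[of x] sv by simp
    qed
    then show ?thesis using True by (simp add: \<phi>_def)
  next
    case False
    then have sv: "s = 1" and Db: "D b = 0" using z by (auto simp: s_def)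
    have I: "(\<phi>' has_integral (\<phi> b - \<phi> t)) {t..b}"
      by (rule ftc_sub[OF _ _ order_refl S pcont pder]) (use t in auto)
    have "\<phi> b - \<phi> t \<ge> 0"
    proof (rule has_integral_nonneg[OF I])
      fix x assume "x \<in> {t..b}"
      then have "x \<in> {a..b}" using t by auto
      then show "\<phi>' x \<ge> 0" using sign[of x] sv by simp
    qed
    then show ?thesis using Db by (simp add: \<phi>_def)
  qed
  moreover have "\<phi> t \<ge> 0" by (simp add: \<phi>_def inner_ge_zero)
  ultimately have "exp (2 * s * C * t) * (D t \<bullet> D t) = 0" unfolding \<phi>_def by linarith
  then show "D t = 0" by simp
qed

lemma pos_integral:
  fixes g :: "real \<Rightarrow> real"
  assumes I: "(g has_integral I) {a..b}" and nn: "\<And>x. x \<in> {a..b} \<Longrightarrow> 0 \<le> g x"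
    and E: "E \<subseteq> {x\<in>{a..b}. g x > 0}" and pos: "emeasure lebesgue E > 0"
  shows "I > 0"
proof (rule ccontr)
  assume "\<not> I > 0"
  moreover have "I \<ge> 0" by (rule has_integral_nonneg[OF I nn])
  ultimately have I0: "I = 0" by simp
  define h where "h x = indicator {a..b} x * g x" for x
  have hnn: "\<And>x. 0 \<le> h x" using nn by (simp add: h_def indicator_def)
  have "((\<lambda>x. if x \<in> {a..b} then g x else 0) has_integral I) UNIV"
    using I has_integral_restrict_UNIV[of "{a..b}" g I] by blast
  moreover have "(\<lambda>x. if x \<in> {a..b} then g x else 0) = h"
    by (auto simp: h_def indicator_def fun_eq_iff)
  ultimately have hI: "(h has_integral 0) UNIV" using I0 by simp
  then have hm: "h \<in> lebesgue \<rightarrow>\<^sub>M borel" and hN: "integral\<^sup>N lebesgue h = 0"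
    using has_integral_iff_nn_integral_lebesgue[of h 0] hnn by auto
  have "AE x in lebesgue. ennreal (h x) = 0"
    using hN by (subst nn_integral_0_iff_AE[symmetric]) (use hm in auto)
  then obtain N where N': "{x \<in> space lebesgue. \<not> ennreal (h x) = 0} \<subseteq> N" "emeasure lebesgue N = 0" "N \<in> sets lebesgue"
    by (rule AE_E)
  then have N: "N \<in> null_sets lebesgue" "{x. \<not> ennreal (h x) = 0} \<subseteq> N" by (auto intro: null_setsI)
  have "E \<subseteq> N"
  proof
    fix x assume "x \<in> E"
    then have "x \<in> {a..b}" "g x > 0" using E by auto
    then have "h x > 0" by (simp add: h_def)
    then show "x \<in> N" using N(2) by auto
  qed
  then have "emeasure lebesgue E = 0"
  proof (cases "E \<in> sets lebesgue")
    case True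
    then show ?thesis using \<open>E \<subseteq> N\<close> N(1) by (metis emeasure_eq_0 null_setsD1 null_setsD2)
  qed (simp add: emeasure_notin_sets)
  then show False using pos by simp
qed



theorem proposition2:
  fixes P :: qsys and T \<mu> nmax :: real and \<rho>0 \<rho>target :: mat4
    and ck ck1 :: "real \<Rightarrow> ctrl" and \<rho>k \<rho>k1 chik1 :: "real \<Rightarrow> mat4"
  assumes par: "params_ok P" and T: "T > 0" and mu: "\<mu> > 0" and nmax: "nmax > 0"
    and dens0: "density_matrix \<rho>0" and denst: "density_matrix \<rho>target"
    and adm_k: "admissible T \<mu> nmax ck"
    and sol_k: "master_solution P T ck \<rho>0 \<rho>k"
    and adm_k1: "admissible T \<mu> nmax ck1"
    and adj_k1: "adjoint_solution P T ck1 \<rho>target chik1"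
    and argmax_u: "\<forall>t\<in>{0..T}. is_arg_max (\<lambda>v. Re (K_u P (chik1 t) (\<rho>k t)) * v)
                                 (\<lambda>v. \<bar>v\<bar> \<le> \<mu>) (cu (ck1 t))"
    and argmax_n: "\<forall>t\<in>{0..T}. \<forall>j\<in>{1,2}. is_arg_max (\<lambda>v. Re (K_n P j (chik1 t) (\<rho>k t)) * v)
                                 (\<lambda>v. 0 \<le> v \<and> v \<le> nmax) (cn (ck1 t) j)"
    and sol_k1: "master_solution P T ck1 \<rho>0 \<rho>k1"
  shows "(\<forall>t\<in>{0..T}.
            Re (K_u P (chik1 t) (\<rho>k t)) * (cu (ck1 t) - cu (ck t))
          + (\<Sum>j\<in>{1,2}. Re (K_n P j (chik1 t) (\<rho>k t)) * (cn (ck1 t) j - cn (ck t) j)) \<ge> 0)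
       \<and> J1_of T \<rho>target \<rho>k1 \<ge> J1_of T \<rho>target \<rho>k
       \<and> ((emeasure lebesgue {t\<in>{0..T}. cu (ck1 t) \<noteq> cu (ck t) \<and> K_u P (chik1 t) (\<rho>k t) \<noteq> 0} > 0
           \<or> (\<exists>j\<in>{1,2}. emeasure lebesgue
                 {t\<in>{0..T}. cn (ck1 t) j \<noteq> cn (ck t) j \<and> K_n P j (chik1 t) (\<rho>k t) \<noteq> 0} > 0))
          \<longrightarrow> J1_of T \<rho>target \<rho>k1 > J1_of T \<rho>target \<rho>k)"
proof -
  have hV: "hermitian (Vop P)" using par by (simp add: params_ok_def)
  have hT: "madj \<rho>target = \<rho>target" using denst by (simp add: density_matrix_def hermitian_def)
  have T0: "0 \<le> T" using T by simp
  obtain S0 where S0: "finite S0" and c0: "continuous_on {0..T} \<rho>k" and i0: "\<rho>k 0 = \<rho>0"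
    and d0: "\<And>t. t \<in> {0..T} - S0 \<Longrightarrow> (\<rho>k has_vector_derivative master_rhs P (ck t) (\<rho>k t)) (at t within {0..T})"
    using sol_k unfolding master_solution_def by blast
  obtain S1 where S1: "finite S1" and c1: "continuous_on {0..T} \<rho>k1" and i1: "\<rho>k1 0 = \<rho>0"
    and d1: "\<And>t. t \<in> {0..T} - S1 \<Longrightarrow> (\<rho>k1 has_vector_derivative master_rhs P (ck1 t) (\<rho>k1 t)) (at t within {0..T})"
    using sol_k1 unfolding master_solution_def by blast
  obtain S2 where S2: "finite S2" and c2: "continuous_on {0..T} chik1" and i2: "chik1 T = \<rho>target"
    and d2: "\<And>t. t \<in> {0..T} - S2 \<Longrightarrow> (chik1 has_vector_derivative adjoint_rhs P (ck1 t) (chik1 t)) (at t within {0..T})"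
    using adj_k1 unfolding adjoint_solution_def by blast
  have bnd: "\<bar>cu (c t)\<bar> \<le> \<mu> \<and> \<bar>cn (c t) 1\<bar> \<le> nmax \<and> \<bar>cn (c t) 2\<bar> \<le> nmax"
    if "admissible T \<mu> nmax c" "t \<in> {0..T}" for c t
    using that unfolding admissible_def by auto
  obtain Cm where Cm: "Cm \<ge> 0" "\<And>c X. \<bar>cu c\<bar> \<le> \<mu> \<and> \<bar>cn c 1\<bar> \<le> nmax \<and> \<bar>cn c 2\<bar> \<le> nmax \<Longrightarrow> norm (master_rhs P c X) \<le> Cm * norm X"
    using unif_bound[of "master_rhs P", OF lin_master[OF hV] master_aff, of \<mu> nmax] by blast
  obtain Ca where Ca: "Ca \<ge> 0" "\<And>c X. \<bar>cu c\<bar> \<le> \<mu> \<and> \<bar>cn c 1\<bar> \<le> nmax \<and> \<bar>cn c 2\<bar> \<le> nmax \<Longrightarrow> norm (adjoint_rhs P c X) \<le> Ca * norm X"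
    using unif_bound[of "adjoint_rhs P", OF lin_adjoint[OF hV] adjoint_aff[OF hV], of \<mu> nmax] by blast
  have herm_chi: "hermitian (chik1 t)" if t: "t \<in> {0..T}" for t
  proof -
    define D where "D s = chik1 s - madj (chik1 s)" for s
    have "\<forall>s\<in>{0..T}. D s = 0"
    proof (rule gronwall_zero[OF T0 S2, where D' = "\<lambda>s. adjoint_rhs P (ck1 s) (D s)" and C = Ca])
      show "continuous_on {0..T} D" unfolding D_def
        by (intro continuous_intros c2 bounded_linear.continuous_on[OF bl_madj])
      fix s assume s: "s \<in> {0..T} - S2"
      have "(D has_vector_derivative (adjoint_rhs P (ck1 s) (chik1 s) - madj (adjoint_rhs P (ck1 s) (chik1 s)))) (at s within {0..T})"
        unfolding D_def by (intro has_vector_derivative_diff d2[OF s] bounded_linear.has_vector_derivative[OF bl_madj])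
      moreover have "adjoint_rhs P (ck1 s) (chik1 s) - madj (adjoint_rhs P (ck1 s) (chik1 s)) = adjoint_rhs P (ck1 s) (D s)"
        unfolding D_def madj_adjoint[OF hV] by (simp add: linear_diff[OF lin_adjoint[OF hV]])
      ultimately show "(D has_vector_derivative adjoint_rhs P (ck1 s) (D s)) (at s within {0..T})" by simp
      show "norm (adjoint_rhs P (ck1 s) (D s)) \<le> Ca * norm (D s)"
        using s by (intro Ca(2) bnd[OF adm_k1]) auto
    next
      show "Ca \<ge> 0" by (rule Ca)
      show "D 0 = 0 \<or> D T = 0" using i2 hT by (simp add: D_def)
    qed
    then show ?thesis using t by (simp add: D_def hermitian_def)
  qed
  have herm_rho: "hermitian (\<rho>k t)" if t: "t \<in> {0..T}" for t
  proof -
    define D where "D s = \<rho>k s - madj (\<rho>k s)" for s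
    have "\<forall>s\<in>{0..T}. D s = 0"
    proof (rule gronwall_zero[OF T0 S0, where D' = "\<lambda>s. master_rhs P (ck s) (D s)" and C = Cm])
      show "continuous_on {0..T} D" unfolding D_def
        by (intro continuous_intros c0 bounded_linear.continuous_on[OF bl_madj])
      fix s assume s: "s \<in> {0..T} - S0"
      have "(D has_vector_derivative (master_rhs P (ck s) (\<rho>k s) - madj (master_rhs P (ck s) (\<rho>k s)))) (at s within {0..T})"
        unfolding D_def by (intro has_vector_derivative_diff d0[OF s] bounded_linear.has_vector_derivative[OF bl_madj])
      moreover have "master_rhs P (ck s) (\<rho>k s) - madj (master_rhs P (ck s) (\<rho>k s)) = master_rhs P (ck s) (D s)"
        unfolding D_def madj_master[OF hV] by (simp add: linear_diff[OF lin_master[OF hV]])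
      ultimately show "(D has_vector_derivative master_rhs P (ck s) (D s)) (at s within {0..T})" by simp
      show "norm (master_rhs P (ck s) (D s)) \<le> Cm * norm (D s)"
        using s by (intro Cm(2) bnd[OF adm_k]) auto
    next
      show "Cm \<ge> 0" by (rule Cm)
      show "D 0 = 0 \<or> D T = 0" using i0 dens0 by (simp add: D_def density_matrix_def hermitian_def)
    qed
    then show ?thesis using t by (simp add: D_def hermitian_def)
  qed
  define g where "g t = Re (K_u P (chik1 t) (\<rho>k t)) * (cu (ck1 t) - cu (ck t))
          + (\<Sum>j\<in>{1,2}. Re (K_n P j (chik1 t) (\<rho>k t)) * (cn (ck1 t) j - cn (ck t) j))" for t
  have argmax_iff: "is_arg_max f Q x \<longleftrightarrow> Q x \<and> (\<forall>y. Q y \<longrightarrow> f y \<le> f x)" for f :: "real \<Rightarrow> real" and Q x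
    by (auto simp: is_arg_max_def not_less)
  have am_u: "Re (K_u P (chik1 t) (\<rho>k t)) * cu (ck t) \<le> Re (K_u P (chik1 t) (\<rho>k t)) * cu (ck1 t)"
    if t: "t \<in> {0..T}" for t
    using argmax_u t bnd[OF adm_k t] unfolding argmax_iff by blast
  have am_n: "Re (K_n P j (chik1 t) (\<rho>k t)) * cn (ck t) j \<le> Re (K_n P j (chik1 t) (\<rho>k t)) * cn (ck1 t) j"
    if t: "t \<in> {0..T}" and j: "j \<in> {1,2}" for t j
  proof -
    have "0 \<le> cn (ck t) j \<and> cn (ck t) j \<le> nmax" using adm_k t j unfolding admissible_def by blast
    then show ?thesis using argmax_n t j unfolding argmax_iff by blast
  qed
  have tu: "0 \<le> Re (K_u P (chik1 t) (\<rho>k t)) * (cu (ck1 t) - cu (ck t))" if t: "t \<in> {0..T}" for t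
    using am_u[OF t] by (simp add: algebra_simps)
  have tn: "0 \<le> Re (K_n P j (chik1 t) (\<rho>k t)) * (cn (ck1 t) j - cn (ck t) j)" if t: "t \<in> {0..T}" and j: "j \<in> {1,2}" for t j
    using am_n[OF t j] by (simp add: algebra_simps)
  have gnn: "0 \<le> g t" if t: "t \<in> {0..T}" for t
    unfolding g_def using tu[OF t] tn[OF t, of 1] tn[OF t, of 2] by (simp add: sum12)
  define h1 where "h1 t = Re (minner (chik1 t) (\<rho>k1 t))" for t
  define h2 where "h2 t = Re (minner (chik1 t) (\<rho>k t))" for t
  have ch1: "continuous_on {0..T} h1" unfolding h1_def
    by (intro bounded_linear.continuous_on[OF bounded_linear_Re] bounded_bilinear.continuous_on[OF bb_minner] c1 c2)
  have ch2: "continuous_on {0..T} h2" unfolding h2_def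
    by (intro bounded_linear.continuous_on[OF bounded_linear_Re] bounded_bilinear.continuous_on[OF bb_minner] c0 c2)
  have dh1: "(h1 has_vector_derivative 0) (at t within {0..T})" if t: "t \<in> {0..T} - (S1 \<union> S2)" for t
  proof -
    have D: "((\<lambda>t. minner (chik1 t) (\<rho>k1 t)) has_vector_derivative
       (minner (chik1 t) (master_rhs P (ck1 t) (\<rho>k1 t)) + minner (adjoint_rhs P (ck1 t) (chik1 t)) (\<rho>k1 t))) (at t within {0..T})"
      using t by (intro minner_vderiv d1 d2) auto
    have E: "minner (chik1 t) (master_rhs P (ck1 t) (\<rho>k1 t)) + minner (adjoint_rhs P (ck1 t) (chik1 t)) (\<rho>k1 t) = 0"
      using duality[OF hV, of "ck1 t" "chik1 t" "\<rho>k1 t"] by (simp add: add.commute)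
    show ?thesis unfolding h1_def
      using bounded_linear.has_vector_derivative[OF bounded_linear_Re D] unfolding E by simp
  qed
  have dh2: "(h2 has_vector_derivative (- g t)) (at t within {0..T})" if t: "t \<in> {0..T} - (S0 \<union> S2)" for t
  proof -
    have D: "((\<lambda>t. minner (chik1 t) (\<rho>k t)) has_vector_derivative
       (minner (chik1 t) (master_rhs P (ck t) (\<rho>k t)) + minner (adjoint_rhs P (ck1 t) (chik1 t)) (\<rho>k t))) (at t within {0..T})"
      using t by (intro minner_vderiv d0 d2) auto
    have E1: "minner (adjoint_rhs P (ck1 t) (chik1 t)) (\<rho>k t) = - minner (chik1 t) (master_rhs P (ck1 t) (\<rho>k t))"
      using duality[OF hV, of "ck1 t" "chik1 t" "\<rho>k t"] by (simp add: eq_neg_iff_add_eq_0)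
    have E2: "Re (minner (chik1 t) (master_rhs P (ck t) (\<rho>k t)) + - minner (chik1 t) (master_rhs P (ck1 t) (\<rho>k t))) = - g t"
      unfolding minner_master_aff g_def sum12 by (simp add: algebra_simps)
    show ?thesis unfolding h2_def
      using bounded_linear.has_vector_derivative[OF bounded_linear_Re D] unfolding E1 E2 .
  qed
  have I1: "((\<lambda>t. 0) has_integral (h1 T - h1 0)) {0..T}"
    by (rule ftc_within[OF T0 finite_UnI[OF S1 S2] ch1 dh1])
  then have h1eq: "h1 T = h1 0" using has_integral_unique[OF I1 has_integral_0] by simp
  have I2: "((\<lambda>t. - g t) has_integral (h2 T - h2 0)) {0..T}"
    by (rule ftc_within[OF T0 finite_UnI[OF S0 S2] ch2 dh2])
  have Jeq: "J1_of T \<rho>target \<rho> = Re (minner \<rho>target (\<rho> T))" for \<rho>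
    unfolding J1_of_def minner_def hT by (rule arg_cong[where f=Re], rule trace_mul_sym)
  have Ig: "(g has_integral (J1_of T \<rho>target \<rho>k1 - J1_of T \<rho>target \<rho>k)) {0..T}"
  proof -
    have "((\<lambda>t. - (- g t)) has_integral - (h2 T - h2 0)) {0..T}" by (rule has_integral_neg[OF I2])
    then have "(g has_integral - (h2 T - h2 0)) {0..T}" by simp
    moreover have "J1_of T \<rho>target \<rho>k1 = h2 0"
    proof -
      have "J1_of T \<rho>target \<rho>k1 = h1 T" unfolding Jeq h1_def i2 ..
      also have "\<dots> = h1 0" by (rule h1eq)
      also have "\<dots> = h2 0" unfolding h1_def h2_def i0 i1 ..
      finally show ?thesis .
    qed
    moreover have "J1_of T \<rho>target \<rho>k = h2 T" unfolding Jeq h2_def i2 ..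
    ultimately show ?thesis by simp
  qed
  have part2: "J1_of T \<rho>target \<rho>k1 \<ge> J1_of T \<rho>target \<rho>k"
    using has_integral_nonneg[OF Ig gnn] by simp
  have gpos: "g t > 0" if t: "t \<in> {0..T}" and
     disj: "(cu (ck1 t) \<noteq> cu (ck t) \<and> K_u P (chik1 t) (\<rho>k t) \<noteq> 0) \<or>
       (\<exists>j\<in>{1,2}. cn (ck1 t) j \<noteq> cn (ck t) j \<and> K_n P j (chik1 t) (\<rho>k t) \<noteq> 0)" for t
  proof -
    have hc: "hermitian (chik1 t)" "hermitian (\<rho>k t)" using herm_chi[OF t] herm_rho[OF t] by auto
    have g3: "g t = Re (K_u P (chik1 t) (\<rho>k t)) * (cu (ck1 t) - cu (ck t))
       + Re (K_n P 1 (chik1 t) (\<rho>k t)) * (cn (ck1 t) 1 - cn (ck t) 1)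
       + Re (K_n P 2 (chik1 t) (\<rho>k t)) * (cn (ck1 t) 2 - cn (ck t) 2)"
      unfolding g_def sum12 by simp
    have a: "0 \<le> Re (K_u P (chik1 t) (\<rho>k t)) * (cu (ck1 t) - cu (ck t))" by (rule tu[OF t])
    have b1: "0 \<le> Re (K_n P 1 (chik1 t) (\<rho>k t)) * (cn (ck1 t) 1 - cn (ck t) 1)" by (rule tn[OF t]) simp
    have b2: "0 \<le> Re (K_n P 2 (chik1 t) (\<rho>k t)) * (cn (ck1 t) 2 - cn (ck t) 2)" by (rule tn[OF t]) simp
    have nz: "x * y \<noteq> 0" if "Re z \<noteq> 0 \<or> False" "x = Re z" "y \<noteq> 0" for x y :: real and z :: complex
      using that by simp
    from disj show ?thesis
    proof (elim disjE bexE conjE)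
      assume d: "cu (ck1 t) \<noteq> cu (ck t)" and k: "K_u P (chik1 t) (\<rho>k t) \<noteq> 0"
      have "Re (K_u P (chik1 t) (\<rho>k t)) \<noteq> 0" using k Ku_real[OF hV hc] by (simp add: complex_eq_iff)
      then have "Re (K_u P (chik1 t) (\<rho>k t)) * (cu (ck1 t) - cu (ck t)) \<noteq> 0" using d by simp
      then show ?thesis using a b1 b2 g3 by linarith
    next
      fix j assume j: "j \<in> {1,2}" and d: "cn (ck1 t) j \<noteq> cn (ck t) j" and k: "K_n P j (chik1 t) (\<rho>k t) \<noteq> 0"
      have "Re (K_n P j (chik1 t) (\<rho>k t)) \<noteq> 0" using k Kn_real[OF hc] by (simp add: complex_eq_iff)
      then have "Re (K_n P j (chik1 t) (\<rho>k t)) * (cn (ck1 t) j - cn (ck t) j) \<noteq> 0" using d by simp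
      then have pos: "0 < Re (K_n P j (chik1 t) (\<rho>k t)) * (cn (ck1 t) j - cn (ck t) j)"
        using tn[OF t j] by linarith
      show ?thesis
      proof (cases "j = 1")
        case True
        show ?thesis using pos a b1 b2 g3 unfolding True by linarith
      next
        case False
        then have "j = 2" using j by simp
        show ?thesis using pos a b1 b2 g3 unfolding \<open>j = 2\<close> by linarith
      qed
    qed
  qed
  show ?thesis
  proof (intro conjI impI ballI)
    fix t assume "t \<in> {0..T}"
    then show "0 \<le> Re (K_u P (chik1 t) (\<rho>k t)) * (cu (ck1 t) - cu (ck t))
          + (\<Sum>j\<in>{1,2}. Re (K_n P j (chik1 t) (\<rho>k t)) * (cn (ck1 t) j - cn (ck t) j))"
      using gnn unfolding g_def by blast
  next
    show "J1_of T \<rho>target \<rho>k1 \<ge> J1_of T \<rho>target \<rho>k" by (rule part2)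
  next
    assume H: "emeasure lebesgue {t\<in>{0..T}. cu (ck1 t) \<noteq> cu (ck t) \<and> K_u P (chik1 t) (\<rho>k t) \<noteq> 0} > 0
           \<or> (\<exists>j\<in>{1,2}. emeasure lebesgue
                 {t\<in>{0..T}. cn (ck1 t) j \<noteq> cn (ck t) j \<and> K_n P j (chik1 t) (\<rho>k t) \<noteq> 0} > 0)"
    have "J1_of T \<rho>target \<rho>k1 - J1_of T \<rho>target \<rho>k > 0"
      using H
    proof (elim disjE bexE)
      assume m: "emeasure lebesgue {t\<in>{0..T}. cu (ck1 t) \<noteq> cu (ck t) \<and> K_u P (chik1 t) (\<rho>k t) \<noteq> 0} > 0"
      have E: "{t\<in>{0..T}. cu (ck1 t) \<noteq> cu (ck t) \<and> K_u P (chik1 t) (\<rho>k t) \<noteq> 0} \<subseteq> {x\<in>{0..T}. g x > 0}"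
        using gpos by blast
      show ?thesis by (rule pos_integral[OF Ig gnn E m])
    next
      fix j assume j: "j \<in> {1,2}" and
        m: "emeasure lebesgue {t\<in>{0..T}. cn (ck1 t) j \<noteq> cn (ck t) j \<and> K_n P j (chik1 t) (\<rho>k t) \<noteq> 0} > 0"
      have E: "{t\<in>{0..T}. cn (ck1 t) j \<noteq> cn (ck t) j \<and> K_n P j (chik1 t) (\<rho>k t) \<noteq> 0} \<subseteq> {x\<in>{0..T}. g x > 0}"
        using gpos j by blast
      show ?thesis by (rule pos_integral[OF Ig gnn E m])
    qed
    then show "J1_of T \<rho>target \<rho>k1 > J1_of T \<rho>target \<rho>k" by simp
  qed
qed
end
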